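(* Let $(a_i)_{i\ge1}$ be a non-decreasing sequence of positive reals with $\sum_i a_i^{-2}<\infty$, let $\mu(\theta)=\sum_i(a_i^2+2\theta)^{-1}$, $\psi(\theta)=\big(\sum_i 2\theta^2(a_i^2+2\theta)^{-2}\big)^{1/2}$, and $\rho(s)=1/\mu^{-1}(s)$ for small $s>0$. Then for every $x\in\mathbb{R}$, \[ \lim_{s\downarrow0}\frac{\psi(\mu^{-1}(s))}{\psi(\mu^{-1}(s+x\rho(s)))}=1. \]
   Context: $\mu^{-1}$ denotes the inverse function of the strictly decreasing function $\mu$ on $(0,\infty)$. *)

theory Defs
  imports Complex_Main
begin

text \<open>Sequence a indexed by nat (index shift i = 0,1,... corresponds to i = 1,2,...).\<close>

definition mu :: "(nat \<Rightarrow> real) \<Rightarrow> real \<Rightarrow> real" where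
  "mu a \<theta> = (\<Sum>i. 1 / ((a i)\<^sup>2 + 2 * \<theta>))"

definition psi :: "(nat \<Rightarrow> real) \<Rightarrow> real \<Rightarrow> real" where
  "psi a \<theta> = sqrt (\<Sum>i. 2 * \<theta>\<^sup>2 / ((a i)\<^sup>2 + 2 * \<theta>)\<^sup>2)"

definition mu_inv :: "(nat \<Rightarrow> real) \<Rightarrow> real \<Rightarrow> real" where
  "mu_inv a s = inv_into {0<..} (mu a) s"

definition rho :: "(nat \<Rightarrow> real) \<Rightarrow> real \<Rightarrow> real" where
  "rho a s = 1 / mu_inv a s"

end

theory Submission
  imports Defs "HOL-Analysis.Elementary_Metric_Spaces"
begin

definition P2 :: "(nat \<Rightarrow> real) \<Rightarrow> real \<Rightarrow> real" where
  "P2 a \<theta> = (\<Sum>i. 2 * \<theta>\<^sup>2 / ((a i)\<^sup>2 + 2 * \<theta>)\<^sup>2)"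

definition S2 :: "(nat \<Rightarrow> real) \<Rightarrow> real \<Rightarrow> real" where
  "S2 a \<theta> = (\<Sum>i. 2 / ((a i)\<^sup>2 + 2 * \<theta>)\<^sup>2)"

lemma term_lower:
  fixes A u v :: real
  assumes "A > 0" "0 \<le> u" "u \<le> v"
  shows "(v - u) * (2 / (A + 2*v)\<^sup>2) \<le> 1/(A + 2*u) - 1/(A + 2*v)"
proof -
  have e: "1/(A + 2*u) - 1/(A + 2*v) = 2*(v-u) / ((A+2*u)*(A+2*v))"
    using assms by (simp add: field_simps)
  have "(A+2*u)*(A+2*v) \<le> (A+2*v)^2" using assms by (simp add: power2_eq_square mult_right_mono)
  then have "2*(v-u) / (A+2*v)^2 \<le> 2*(v-u) / ((A+2*u)*(A+2*v))"
    using assms by (intro divide_left_mono) auto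
  moreover have "(v - u) * (2 / (A + 2*v)\<^sup>2) = 2*(v-u) / (A+2*v)^2" by simp
  ultimately show ?thesis using e by linarith
qed

lemma term_upper:
  fixes A u v :: real
  assumes "A > 0" "0 \<le> u" "u \<le> v"
  shows "1/(A + 2*u) - 1/(A + 2*v) \<le> (v - u) * (2 / A\<^sup>2)"
proof -
  have e: "1/(A + 2*u) - 1/(A + 2*v) = 2*(v-u) / ((A+2*u)*(A+2*v))"
    using assms by (simp add: field_simps)
  have "A^2 \<le> (A+2*u)*(A+2*v)" using assms by (simp add: power2_eq_square mult_mono)
  then have "2*(v-u) / ((A+2*u)*(A+2*v)) \<le> 2*(v-u) / A^2"
    using assms by (intro divide_left_mono) auto
  moreover have "(v - u) * (2 / A\<^sup>2) = 2*(v-u) / A^2" by simp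
  ultimately show ?thesis using e by linarith
qed

lemma summable_le_nonneg:
  fixes f g :: "nat \<Rightarrow> real"
  assumes "\<And>i. 0 \<le> f i" "\<And>i. f i \<le> g i" "summable g"
  shows "summable f"
  by (rule summable_comparison_test'[OF assms(3), of 0]) (use assms in auto)

lemma div_anti:
  fixes c x y :: real
  assumes "0 < x" "x \<le> y" "0 \<le> c"
  shows "c / y \<le> c / x"
  using assms by (intro divide_left_mono) (auto intro: mult_pos_pos)

lemma suminf_cmult_eq:
  fixes f g :: "nat \<Rightarrow> real"
  assumes "summable f" "\<And>i. g i = c * f i"
  shows "suminf g = c * suminf f"
proof -
  have "g = (\<lambda>i. c * f i)" using assms(2) by auto
  then show ?thesis using suminf_mult[OF assms(1)] by simp
qed

context
  fixes a :: "nat \<Rightarrow> real"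
  assumes amono: "mono a" and apos: "\<And>i. a i > 0" and asum: "summable (\<lambda>i. 1 / (a i)\<^sup>2)"
begin

lemma a_ne [simp]: "a i \<noteq> 0" using apos[of i] by simp
lemma asq_pos [simp]: "0 < (a i)\<^sup>2" using apos[of i] by simp
lemma aplus_pos [simp]: "0 \<le> t \<Longrightarrow> 0 < (a i)\<^sup>2 + 2 * t"
  using asq_pos[of i] by linarith

lemma sum4: "summable (\<lambda>i. 2 / ((a i)\<^sup>2)\<^sup>2)"
proof (rule summable_le_nonneg)
  show "summable (\<lambda>i. (2/(a 0)\<^sup>2) * (1/(a i)\<^sup>2))" using asum by (rule summable_mult)
  fix i
  have "a 0 \<le> a i" using amono by (simp add: monoD)
  hence h: "(a 0)^2 \<le> (a i)^2" using apos[of 0] by (simp add: power_mono less_imp_le)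
  have "2 / ((a i)\<^sup>2)\<^sup>2 = 2 / ((a i)\<^sup>2 * (a i)\<^sup>2)" by (simp add: power2_eq_square)
  also have "\<dots> \<le> 2 / ((a 0)\<^sup>2 * (a i)\<^sup>2)"
    using h apos[of 0] apos[of i] by (intro divide_left_mono mult_right_mono) auto
  also have "\<dots> = (2/(a 0)\<^sup>2) * (1/(a i)\<^sup>2)" by simp
  finally show "2 / ((a i)\<^sup>2)\<^sup>2 \<le> (2/(a 0)\<^sup>2) * (1/(a i)\<^sup>2)" .
  show "0 \<le> 2 / ((a i)\<^sup>2)\<^sup>2" by simp
qed

lemma sum_mu: "0 \<le> t \<Longrightarrow> summable (\<lambda>i. 1 / ((a i)\<^sup>2 + 2 * t))"
proof (rule summable_le_nonneg[OF _ _ asum])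
  fix i assume t: "0 \<le> t"
  have "0 < (a i)\<^sup>2" using apos[of i] by simp
  then show "1 / ((a i)\<^sup>2 + 2 * t) \<le> 1 / (a i)\<^sup>2" using t by (intro div_anti) auto
  show "0 \<le> 1 / ((a i)\<^sup>2 + 2 * t)" using t by simp
qed

lemma sum_S: "0 \<le> t \<Longrightarrow> summable (\<lambda>i. 2 / ((a i)\<^sup>2 + 2 * t)\<^sup>2)"
proof (rule summable_le_nonneg[OF _ _ sum4])
  fix i assume t: "0 \<le> t"
  have "(a i)\<^sup>2 \<le> (a i)\<^sup>2 + 2*t" using t by simp
  hence "((a i)\<^sup>2)\<^sup>2 \<le> ((a i)\<^sup>2 + 2*t)\<^sup>2" by (rule power_mono) simp
  then show "2 / ((a i)\<^sup>2 + 2 * t)\<^sup>2 \<le> 2 / ((a i)\<^sup>2)\<^sup>2"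
    using apos[of i] by (intro div_anti) auto
qed simp

lemma sum_P: "0 \<le> t \<Longrightarrow> summable (\<lambda>i. 2 * t\<^sup>2 / ((a i)\<^sup>2 + 2 * t)\<^sup>2)"
proof -
  assume t: "0 \<le> t"
  have "summable (\<lambda>i. t\<^sup>2 * (2 / ((a i)\<^sup>2 + 2 * t)\<^sup>2))" using sum_S[OF t] by (rule summable_mult)
  moreover have "(\<lambda>i. t\<^sup>2 * (2 / ((a i)\<^sup>2 + 2 * t)\<^sup>2)) = (\<lambda>i. 2 * t\<^sup>2 / ((a i)\<^sup>2 + 2 * t)\<^sup>2)"
    by (auto simp: fun_eq_iff)
  ultimately show ?thesis by simp
qed

lemma P2_eq: "0 \<le> t \<Longrightarrow> P2 a t = t\<^sup>2 * S2 a t"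
  unfolding P2_def S2_def by (rule suminf_cmult_eq[OF sum_S]) auto

lemma mu_diff_lower:
  assumes "0 \<le> u" "u \<le> v"
  shows "(v - u) * S2 a v \<le> mu a u - mu a v"
proof -
  have "(v - u) * S2 a v = (\<Sum>i. (v-u) * (2 / ((a i)\<^sup>2 + 2 * v)\<^sup>2))"
    unfolding S2_def using assms by (intro suminf_cmult_eq[symmetric] sum_S) auto
  also have "\<dots> \<le> (\<Sum>i. 1 / ((a i)\<^sup>2 + 2 * u) - 1 / ((a i)\<^sup>2 + 2 * v))"
    using assms apos
    by (intro suminf_le term_lower summable_mult summable_diff sum_S sum_mu) auto
  also have "\<dots> = mu a u - mu a v" unfolding mu_def
    using assms by (intro suminf_diff[symmetric] sum_mu) auto
  finally show ?thesis .
qed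

lemma mu_diff_upper:
  assumes "0 \<le> u" "u \<le> v"
  shows "mu a u - mu a v \<le> (v - u) * (\<Sum>i. 2 / ((a i)\<^sup>2)\<^sup>2)"
proof -
  have "mu a u - mu a v = (\<Sum>i. 1 / ((a i)\<^sup>2 + 2 * u) - 1 / ((a i)\<^sup>2 + 2 * v))"
    unfolding mu_def using assms by (intro suminf_diff sum_mu) auto
  also have "\<dots> \<le> (\<Sum>i. (v-u) * (2 / ((a i)\<^sup>2)\<^sup>2))"
    using assms apos
    by (intro suminf_le term_upper summable_mult summable_diff sum4 sum_mu) auto
  also have "\<dots> = (v - u) * (\<Sum>i. 2 / ((a i)\<^sup>2)\<^sup>2)"
    by (rule suminf_cmult_eq[OF sum4]) simp
  finally show ?thesis .
qed

lemma S2_pos: "0 \<le> t \<Longrightarrow> S2 a t > 0"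
  unfolding S2_def
proof (rule suminf_pos[OF sum_S])
  fix n assume "0 \<le> t"
  then have "0 < (a n)\<^sup>2 + 2 * t" by simp
  then show "0 < 2 / ((a n)\<^sup>2 + 2 * t)\<^sup>2" by simp
qed

lemma mu_pos: "0 \<le> t \<Longrightarrow> mu a t > 0"
  unfolding mu_def by (rule suminf_pos[OF sum_mu]) (use apos in \<open>auto simp: add_pos_nonneg\<close>)

lemma mu_strict: "0 \<le> u \<Longrightarrow> u < v \<Longrightarrow> mu a v < mu a u"
  using mu_diff_lower[of u v] S2_pos[of v] by (smt (verit) mult_pos_pos)

lemma mu_anti: "0 \<le> u \<Longrightarrow> u \<le> v \<Longrightarrow> mu a v \<le> mu a u"
  using mu_strict[of u v] by (cases "u = v") auto


lemma P2_mono: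
  assumes "0 \<le> u" "u \<le> v"
  shows "P2 a u \<le> P2 a v"
  unfolding P2_def
proof (rule suminf_le[OF _ sum_P sum_P])
  fix i
  define A where "A = (a i)\<^sup>2"
  have A: "0 < A" unfolding A_def by simp
  have pu: "0 < A + 2*u" "0 < A + 2*v" using A assms by auto
  have "u * A \<le> v * A" using assms A by (intro mult_right_mono) auto
  then have "u * (A + 2*v) \<le> v * (A + 2*u)" by (simp add: algebra_simps)
  then have h: "u/(A+2*u) \<le> v/(A+2*v)" using pu by (simp add: divide_simps)
  have "(u/(A+2*u))^2 \<le> (v/(A+2*v))^2" using h pu assms by (intro power_mono) auto
  then have "2*(u/(A+2*u))^2 \<le> 2*(v/(A+2*v))^2" by simp
  then show "2 * u\<^sup>2 / ((a i)\<^sup>2 + 2 * u)\<^sup>2 \<le> 2 * v\<^sup>2 / ((a i)\<^sup>2 + 2 * v)\<^sup>2"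
    unfolding A_def by (simp add: power_divide)
qed (use assms in auto)

lemma P2_ratio:
  assumes "0 < u" "u \<le> v"
  shows "P2 a v \<le> (v/u)\<^sup>2 * P2 a u"
proof -
  have "P2 a v \<le> (\<Sum>i. (v/u)\<^sup>2 * (2 * u\<^sup>2 / ((a i)\<^sup>2 + 2 * u)\<^sup>2))"
    unfolding P2_def
  proof (rule suminf_le[OF _ sum_P summable_mult[OF sum_P]])
    fix i
    define A where "A = (a i)\<^sup>2"
    have A: "0 < A" unfolding A_def by simp
    have pu: "0 < A + 2*u" "0 < A + 2*v" using A assms by auto
    have e: "(v/u)\<^sup>2 * (2 * u\<^sup>2 / (A + 2 * u)\<^sup>2) = 2 * v\<^sup>2 / (A + 2*u)\<^sup>2"
      using assms pu by (simp add: field_simps power_divide)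
    have "(A + 2*u)\<^sup>2 \<le> (A + 2*v)\<^sup>2" using pu assms by (intro power_mono) auto
    then have "2 * v\<^sup>2 / (A + 2*v)\<^sup>2 \<le> 2 * v\<^sup>2 / (A + 2*u)\<^sup>2" using pu
      by (intro div_anti) auto
    then show "2 * v\<^sup>2 / ((a i)\<^sup>2 + 2 * v)\<^sup>2 \<le> (v/u)\<^sup>2 * (2 * u\<^sup>2 / ((a i)\<^sup>2 + 2 * u)\<^sup>2)"
      unfolding A_def[symmetric] using e by linarith
  qed (use assms in auto)
  also have "\<dots> = (v/u)\<^sup>2 * P2 a u" unfolding P2_def
    using assms by (intro suminf_cmult_eq sum_P) auto
  finally show ?thesis .
qed

lemma P2_nonneg: "0 \<le> t \<Longrightarrow> 0 \<le> P2 a t"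
  unfolding P2_def by (rule suminf_nonneg[OF sum_P]) auto

lemma P2_le_tmu:
  assumes "0 \<le> t"
  shows "P2 a t \<le> t * mu a t"
proof -
  have "P2 a t \<le> (\<Sum>i. t * (1 / ((a i)\<^sup>2 + 2 * t)))"
    unfolding P2_def
  proof (rule suminf_le[OF _ sum_P summable_mult[OF sum_mu]])
    fix i
    define A where "A = (a i)\<^sup>2"
    have A: "0 < A" unfolding A_def by simp
    have pu: "0 < A + 2*t" using A assms by auto
    have "2 * t\<^sup>2 / (A + 2 * t)\<^sup>2 = (t / (A + 2*t)) * (2*t / (A + 2*t))"
      by (simp add: power2_eq_square)
    also have "\<dots> \<le> (t / (A + 2*t)) * 1"
      using pu A assms by (intro mult_left_mono) auto
    finally show "2 * t\<^sup>2 / ((a i)\<^sup>2 + 2 * t)\<^sup>2 \<le> t * (1 / ((a i)\<^sup>2 + 2 * t))"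
      unfolding A_def by simp
  qed (use assms in auto)
  also have "\<dots> = t * mu a t" unfolding mu_def
    using assms by (intro suminf_cmult_eq sum_mu) auto
  finally show ?thesis .
qed

lemma P2_unbounded: "\<exists>t>0. B \<le> P2 a t"
proof -
  define N where "N = nat \<lceil>9 * B / 2\<rceil>"
  define t where "t = (a N)\<^sup>2"
  have t: "0 < t" unfolding t_def by simp
  have tm: "2/9 \<le> 2 * t\<^sup>2 / ((a i)\<^sup>2 + 2 * t)\<^sup>2" if "i < N" for i
  proof -
    have "a i \<le> a N" using amono that by (simp add: monoD)
    then have "(a i)\<^sup>2 \<le> t" unfolding t_def using apos[of i] by (intro power_mono) auto
    then have "(a i)\<^sup>2 + 2 * t \<le> 3 * t" by simp
    then have "((a i)\<^sup>2 + 2 * t)\<^sup>2 \<le> (3 * t)\<^sup>2" using t aplus_pos[of t i] by (intro power_mono) auto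
    moreover have p: "0 < ((a i)\<^sup>2 + 2 * t)\<^sup>2"
    proof -
      have "0 < (a i)\<^sup>2 + 2 * t" using asq_pos[of i] t by linarith
      then show ?thesis by simp
    qed
    ultimately have "2 * t\<^sup>2 / (3 * t)\<^sup>2 \<le> 2 * t\<^sup>2 / ((a i)\<^sup>2 + 2 * t)\<^sup>2"
      by (intro div_anti) auto
    moreover have "2 * t\<^sup>2 / (3 * t)\<^sup>2 = 2/9" using t by (simp add: power2_eq_square)
    ultimately show ?thesis by simp
  qed
  have "(\<Sum>i<N. (2::real)/9) \<le> (\<Sum>i<N. 2 * t\<^sup>2 / ((a i)\<^sup>2 + 2 * t)\<^sup>2)"
    by (intro sum_mono tm) simp
  also have "\<dots> \<le> P2 a t" unfolding P2_def
    by (rule sum_le_suminf[OF sum_P]) (use t in auto)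
  finally have "2 * real N / 9 \<le> P2 a t" by simp
  moreover have "B \<le> 2 * real N / 9" unfolding N_def by linarith
  ultimately show ?thesis using t by (intro exI[of _ t]) auto
qed

lemma mu_lip:
  assumes "0 \<le> u" "0 \<le> v"
  shows "\<bar>mu a u - mu a v\<bar> \<le> \<bar>u - v\<bar> * (\<Sum>i. 2 / ((a i)\<^sup>2)\<^sup>2)"
proof (cases "u \<le> v")
  case True
  then show ?thesis using mu_diff_upper[of u v] mu_anti[of u v] assms by auto
next
  case False
  then show ?thesis using mu_diff_upper[of v u] mu_anti[of v u] assms by auto
qed

lemma mu_cont: "continuous_on {0..b} (mu a)"
  unfolding continuous_on_iff
proof (intro ballI allI impI)
  fix x e :: real assume x: "x \<in> {0..b}" and e: "0 < e"
  define L where "L = (\<Sum>i. 2 / ((a i)\<^sup>2)\<^sup>2)"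
  have L: "0 \<le> L" unfolding L_def by (rule suminf_nonneg[OF sum4]) simp
  show "\<exists>d>0. \<forall>x'\<in>{0..b}. dist x' x < d \<longrightarrow> dist (mu a x') (mu a x) < e"
  proof (intro exI[of _ "e / (L + 1)"] conjI ballI impI)
    show "0 < e / (L + 1)" using e L by simp
    fix x' assume x': "x' \<in> {0..b}" and d: "dist x' x < e / (L + 1)"
    have "\<bar>mu a x' - mu a x\<bar> \<le> \<bar>x' - x\<bar> * L" unfolding L_def using x x' by (intro mu_lip) auto
    also have "\<dots> \<le> \<bar>x' - x\<bar> * (L + 1)" by (intro mult_left_mono) auto
    also have "\<dots> < e / (L + 1) * (L + 1)" using d L by (intro mult_strict_right_mono) (auto simp: dist_real_def)
    also have "\<dots> = e" using L by simp
    finally show "dist (mu a x') (mu a x) < e" by (simp add: dist_real_def)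
  qed
qed

lemma mu_small:
  assumes s: "0 < s"
  shows "\<exists>t\<ge>0. mu a t < s"
proof -
  obtain N where N: "\<And>n. n \<ge> N \<Longrightarrow> norm (\<Sum>i. 1 / (a (i + n))\<^sup>2) < s/2"
    using suminf_exist_split[of "s/2", OF _ asum] s by auto
  define t where "t = real N / s + 1"
  have t: "0 < t" unfolding t_def using s by (simp add: add_nonneg_pos)
  let ?f = "\<lambda>i. 1 / ((a i)\<^sup>2 + 2 * t)"
  have "mu a t = (\<Sum>i. ?f (i + N)) + (\<Sum>i<N. ?f i)" unfolding mu_def
    by (rule suminf_split_initial_segment[OF sum_mu]) (use t in auto)
  moreover have "(\<Sum>i. ?f (i + N)) \<le> (\<Sum>i. 1 / (a (i + N))\<^sup>2)"
  proof (rule suminf_le)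
    show "summable (\<lambda>i. ?f (i + N))" using sum_mu[of t] t by (intro summable_ignore_initial_segment) auto
    show "summable (\<lambda>i. 1 / (a (i + N))\<^sup>2)" using asum by (rule summable_ignore_initial_segment)
    fix i show "?f (i + N) \<le> 1 / (a (i + N))\<^sup>2" using t by (intro div_anti) auto
  qed
  moreover have "(\<Sum>i. 1 / (a (i + N))\<^sup>2) < s/2" using N[of N] by auto
  moreover have "(\<Sum>i<N. ?f i) \<le> (\<Sum>i<N. 1 / (2 * t))"
    by (intro sum_mono div_anti) (use t in auto)
  moreover have "(\<Sum>i<N. 1 / (2 * t)) < s / 2"
  proof -
    have "real N < s * t" unfolding t_def using s by (simp add: field_simps)
    then show ?thesis using t s by (simp add: field_simps)
  qed
  ultimately show ?thesis using t by (intro exI[of _ t]) auto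
qed

lemma mu_surj:
  assumes "0 < s" "s < mu a 0"
  shows "s \<in> mu a ` {0<..}"
proof -
  obtain b where b: "0 \<le> b" "mu a b < s" using mu_small assms by blast
  obtain t where t: "0 \<le> t" "t \<le> b" "mu a t = s"
    using IVT2'[of "mu a" b s 0, OF _ _ b(1) mu_cont] b assms by auto
  have "t \<noteq> 0" using t assms by auto
  then show ?thesis using t by auto
qed

lemma mu_inv_props:
  assumes "0 < s" "s < mu a 0"
  shows "mu_inv a s > 0" "mu a (mu_inv a s) = s"
proof -
  have m: "s \<in> mu a ` {0<..}" by (rule mu_surj[OF assms])
  show "mu_inv a s > 0" using inv_into_into[OF m] unfolding mu_inv_def by simp
  show "mu a (mu_inv a s) = s" using f_inv_into_f[OF m] unfolding mu_inv_def by simp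
qed


lemma psi_P2: "psi a t = sqrt (P2 a t)"
  by (simp add: psi_def P2_def)

lemma sqrt_ratio:
  fixes p q c :: real
  assumes "0 \<le> q" "0 < c" "p \<le> c\<^sup>2 * q"
  shows "sqrt p \<le> c * sqrt q"
proof -
  have "sqrt p \<le> sqrt (c\<^sup>2 * q)" using assms by (intro real_sqrt_le_mono) auto
  also have "\<dots> = c * sqrt q" using assms by (simp add: real_sqrt_mult)
  finally show ?thesis .
qed

lemma key:
  assumes th: "0 < t" "0 < t'" and eq: "mu a t' = mu a t + x / t"
    and e: "0 < e" "e \<le> 1/2" and big: "4 * \<bar>x\<bar> / e < P2 a t"
  shows "\<bar>psi a t / psi a t' - 1\<bar> < 2 * e"
proof -
  have big2: "4 * \<bar>x\<bar> < e * P2 a t" using big e by (simp add: field_simps)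
  have Pt: "0 < P2 a t" using big e by (smt (verit) divide_nonneg_pos)
  have St: "P2 a t = t\<^sup>2 * S2 a t" using P2_eq th by auto
  show ?thesis
  proof (cases "0 \<le> x")
    case True
    have le: "t' \<le> t"
    proof (rule ccontr)
      assume "\<not> t' \<le> t"
      then have "mu a t' < mu a t" using mu_strict[of t t'] th by auto
      moreover have "0 \<le> x / t" using True th by simp
      ultimately show False using eq by linarith
    qed
    have gt: "(1 - e) * t < t'"
    proof (rule ccontr)
      assume "\<not> (1 - e) * t < t'"
      then have h: "e * t \<le> t - t'" by (simp add: algebra_simps)
      have "e * t * S2 a t \<le> (t - t') * S2 a t"
        using h S2_pos[of t] th by (intro mult_right_mono) auto
      also have "\<dots> \<le> mu a t' - mu a t" using mu_diff_lower[of t' t] th le by auto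
      also have "\<dots> = x / t" using eq by simp
      finally have "e * t * S2 a t * t \<le> x / t * t" using th by (intro mult_right_mono) auto
      then have "e * P2 a t \<le> x" using th St by (simp add: power2_eq_square algebra_simps)
      then show False using big2 True by linarith
    qed
    have t'pos: "0 < t'" by fact
    have r1: "P2 a t' \<le> P2 a t" using P2_mono[of t' t] th le by auto
    have r2: "P2 a t \<le> (t/t')\<^sup>2 * P2 a t'" using P2_ratio[of t' t] th le by auto
    have P't: "0 < P2 a t'"
    proof (rule ccontr)
      assume "\<not> 0 < P2 a t'"
      then have "P2 a t' = 0" using P2_nonneg[of t'] th by auto
      then show False using r2 Pt by simp
    qed
    define p where "p = sqrt (P2 a t)"
    define q where "q = sqrt (P2 a t')"
    have q: "0 < q" unfolding q_def using P't by simp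
    have pq1: "q \<le> p" unfolding p_def q_def using r1 by simp
    have pq2: "p \<le> (t/t') * q" unfolding p_def q_def
      using r2 th P't by (intro sqrt_ratio) auto
    have "1 \<le> p / q" using pq1 q by simp
    moreover have "p / q \<le> t / t'" using pq2 q by (simp add: divide_le_eq mult.commute)
    moreover have "t / t' < 1 + 2 * e"
    proof -
      have "t \<le> (1 + 2 * e) * ((1 - e) * t)"
      proof -
        have "(1 + 2 * e) * (1 - e) = 1 + e * (1 - 2 * e)" by (simp add: algebra_simps)
        moreover have "0 \<le> e * (1 - 2 * e)" using e by simp
        ultimately have "1 \<le> (1 + 2 * e) * (1 - e)" by linarith
        then have "t \<le> (1 + 2 * e) * (1 - e) * t" using th by simp
        then show ?thesis by (simp add: mult.assoc)
      qed
      also have "\<dots> < (1 + 2 * e) * t'" using gt e by (intro mult_strict_left_mono) auto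
      finally show ?thesis using th by (simp add: divide_less_eq)
    qed
    ultimately show ?thesis unfolding psi_P2 p_def[symmetric] q_def[symmetric] by auto
  next
    case False
    have le: "t < t'"
    proof (rule ccontr)
      assume "\<not> t < t'"
      then have "mu a t \<le> mu a t'" using mu_anti[of t' t] th by auto
      moreover have "x / t < 0" using False th by (simp add: divide_neg_pos)
      ultimately show False using eq by linarith
    qed
    have lt: "t' < (1 + e) * t"
    proof (rule ccontr)
      assume "\<not> t' < (1 + e) * t"
      then have h: "(1 + e) * t \<le> t'" by simp
      define w where "w = (1 + e) * t"
      have w: "0 < w" "t \<le> w" using th e unfolding w_def by (auto simp: algebra_simps intro: add_pos_pos mult_pos_pos)
      have "mu a t' \<le> mu a w" using mu_anti[of w t'] h w unfolding w_def by auto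
      have "e * t * S2 a w \<le> mu a t - mu a w"
        using mu_diff_lower[of t w] th w unfolding w_def by (simp add: algebra_simps)
      also have "\<dots> \<le> mu a t - mu a t'" using \<open>mu a t' \<le> mu a w\<close> by simp
      also have "\<dots> = - x / t" using eq by simp
      finally have A: "e * t * S2 a w \<le> - x / t" .
      have Sw: "P2 a w = w\<^sup>2 * S2 a w" using P2_eq w by auto
      have "P2 a t \<le> P2 a w" using P2_mono w th by auto
      also have "\<dots> = w\<^sup>2 * S2 a w" by (rule Sw)
      finally have B: "P2 a t \<le> w\<^sup>2 * S2 a w" .
      have "e * t * S2 a w * t \<le> - x / t * t" using A th by (intro mult_right_mono) auto
      then have C: "e * t\<^sup>2 * S2 a w \<le> - x" using th by (simp add: power2_eq_square algebra_simps)
      have "w\<^sup>2 \<le> 4 * t\<^sup>2"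
      proof -
        have "w \<le> 2 * t" using e th unfolding w_def by (simp add: algebra_simps)
        then have "w\<^sup>2 \<le> (2 * t)\<^sup>2" using w by (intro power_mono) auto
        then show ?thesis by (simp add: power_mult_distrib)
      qed
      then have "e * (w\<^sup>2 * S2 a w) \<le> e * (4 * t\<^sup>2 * S2 a w)"
        using e S2_pos[of w] w by (intro mult_left_mono mult_right_mono) auto
      moreover have "e * P2 a t \<le> e * (w\<^sup>2 * S2 a w)" using B e by (intro mult_left_mono) auto
      ultimately have "e * P2 a t \<le> e * (4 * t\<^sup>2 * S2 a w)" by linarith
      then have "e * P2 a t \<le> 4 * (e * t\<^sup>2 * S2 a w)" by (simp add: algebra_simps)
      then have "e * P2 a t \<le> 4 * (- x)" using C by linarith
      then show False using big2 False by linarith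
    qed
    have r1: "P2 a t \<le> P2 a t'" using P2_mono[of t t'] th le by auto
    have r2: "P2 a t' \<le> (t'/t)\<^sup>2 * P2 a t" using P2_ratio[of t t'] th le by auto
    define p where "p = sqrt (P2 a t)"
    define q where "q = sqrt (P2 a t')"
    have p: "0 < p" unfolding p_def using Pt by simp
    have q: "0 < q" unfolding q_def using Pt r1 by simp
    have pq1: "p \<le> q" unfolding p_def q_def using r1 by simp
    have pq2: "q \<le> (t'/t) * p" unfolding p_def q_def
      using r2 th Pt by (intro sqrt_ratio) auto
    have "p / q \<le> 1" using pq1 q by simp
    moreover have "t / t' \<le> p / q"
    proof -
      have "q * t \<le> t' * p" using pq2 th by (simp add: field_simps)
      then show ?thesis using q th by (simp add: field_simps)
    qed
    moreover have "1 - e < t / t'"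
    proof -
      have "(1 - e) * t' < (1 - e) * ((1 + e) * t)" using lt e by (intro mult_strict_left_mono) auto
      also have "\<dots> = (1 - e*e) * t" by (simp add: algebra_simps)
      also have "\<dots> \<le> t" using th e by (simp add: mult_le_cancel_right1)
      finally show ?thesis using th by (simp add: less_divide_eq)
    qed
    ultimately show ?thesis unfolding psi_P2 p_def[symmetric] q_def[symmetric] using e by auto
  qed
qed

end

theorem mainTheorem12:
  fixes a :: "nat \<Rightarrow> real" and x :: real
  assumes "mono a"
    and "\<And>i. a i > 0"
    and "summable (\<lambda>i. 1 / (a i)\<^sup>2)"
  shows "((\<lambda>s. psi a (mu_inv a s) / psi a (mu_inv a (s + x * rho a s)))
            \<longlongrightarrow> 1) (at_right 0)"
  unfolding tendsto_iff
proof (intro allI impI)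
  fix d :: real assume d: "0 < d"
  define e where "e = min (1/2) (d/4)"
  have e: "0 < e" "e \<le> 1/2" "2 * e < d" unfolding e_def using d by auto
  define M0 where "M0 = mu a 0"
  have M0: "0 < M0" unfolding M0_def using mu_pos[OF assms, of 0] by simp
  define K where "K = 4 * \<bar>x\<bar> / e + \<bar>x\<bar>"
  have K1: "4 * \<bar>x\<bar> / e \<le> K" "\<bar>x\<bar> \<le> K" unfolding K_def using e by auto
  obtain t0 where t0: "0 < t0" "K + 1 \<le> P2 a t0" using P2_unbounded[OF assms, of "K + 1"] by blast
  define t1 where "t1 = max t0 (2 * \<bar>x\<bar> / M0 + 1)"
  have t1: "0 < t1" "t0 \<le> t1" "2 * \<bar>x\<bar> / M0 < t1" unfolding t1_def using t0 by auto
  define b where "b = min (M0/2) (mu a t1)"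
  have b: "0 < b" unfolding b_def using M0 mu_pos[OF assms, of t1] t1 by auto
  have "eventually (\<lambda>s. s \<in> {0<..<b}) (at_right 0)" by (rule eventually_at_right_real[OF b])
  then show "eventually (\<lambda>s. dist (psi a (mu_inv a s) / psi a (mu_inv a (s + x * rho a s))) 1 < d) (at_right 0)"
  proof (rule eventually_mono)
    fix s assume s: "s \<in> {0<..<b}"
    then have s0: "0 < s" and sb: "s < b" by auto
    have sM: "s < M0" using sb b_def M0 by auto
    define T where "T = mu_inv a s"
    have T: "0 < T" "mu a T = s" unfolding T_def
      using mu_inv_props[OF assms, of s] s0 sM unfolding M0_def by auto
    have Tt1: "t1 < T"
    proof (rule ccontr)
      assume "\<not> t1 < T"
      then have "mu a t1 \<le> mu a T" using mu_anti[OF assms, of T t1] T by auto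
      then show False using T sb unfolding b_def by auto
    qed
    have PT: "K + 1 \<le> P2 a T" using P2_mono[OF assms, of t0 T] t0 t1 Tt1 by auto
    have "P2 a T \<le> T * s" using P2_le_tmu[OF assms, of T] T by auto
    then have xT: "\<bar>x\<bar> < T * s" using PT K1 by linarith
    define s' where "s' = s + x * rho a s"
    have s'eq: "s' = s + x / T" unfolding s'_def rho_def T_def by simp
    have ax: "\<bar>x / T\<bar> = \<bar>x\<bar> / T" using T by simp
    have "\<bar>x\<bar> / T < s" using xT T by (simp add: divide_less_eq mult.commute)
    then have s'0: "0 < s'" unfolding s'eq using ax by (smt (verit))
    have "2 * \<bar>x\<bar> / M0 < T" using t1 Tt1 by linarith
    then have "2 * \<bar>x\<bar> < T * M0" using M0 by (simp add: divide_less_eq)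
    then have "\<bar>x\<bar> / T < M0 / 2" using T by (simp add: divide_less_eq field_simps)
    moreover have "s < M0 / 2" using sb unfolding b_def by auto
    ultimately have s'M: "s' < M0" unfolding s'eq using ax abs_ge_self[of "x / T"] by linarith
    define T' where "T' = mu_inv a s'"
    have T': "0 < T'" "mu a T' = s'" unfolding T'_def
      using mu_inv_props[OF assms, of s'] s'0 s'M unfolding M0_def by auto
    have "\<bar>psi a T / psi a T' - 1\<bar> < 2 * e"
      using key[OF assms, of T T' x e] T T' s'eq e PT K1 by auto
    then show "dist (psi a (mu_inv a s) / psi a (mu_inv a (s + x * rho a s))) 1 < d"
      using e unfolding T_def T'_def s'_def dist_real_def by linarith
  qed
qed

end
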